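(* Let $\mathcal{D}=\{(X_i,B_i):i\in I\}$ be a collection of random variable/nonempty event pairs with coherent$_1$ conditional previsions $\{P(X_i\mid B_i):i\in I\}$. Let $X$ be a random variable and $B$ a nonempty event such that $(B,\Omega)\in\mathcal{D}$ and $(XB,\Omega)\in\mathcal{D}$, where $XB$ is the product of $X$ with the indicator of $B$, and $P(B)=P(B\mid\Omega)=0$. (1) If $P(XB)=P(XB\mid\Omega)\ne0$, the only value $p$ for which the previsions in $\mathcal{D}$ together with $P(X\mid B)=p$ are coherent$_1$ is the infinite value with the same sign as $P(XB)$. (2) If $P(XB)=0$, then for every extended real number $p$, the previsions in $\mathcal{D}$ together with $P(X\mid B)=p$ are coherent$_1$.
   Context: Let $\Omega$ be a nonempty set of states $\omega$; events are subsets of $\Omega$ and random variables are real-valued functions on $\Omega$. An event $B$ is identified with its indicator function. A conditional prevision $P(X\mid B)$ is an extended real number; $P(X)=P(X\mid\Omega)$. Coherence$_1$: a collection $\{P(X_i\mid B_i):i\in I\}$ is coherent$_1$ if for every finite $\{i_1,\dots,i_n\}\subseteq I$, all real $\alpha_1,\dots,\alpha_n$ with $\alpha_j\ge 0$ whenever $P(X_{i_j}\mid B_{i_j})=+\infty$ and $\alpha_j\le 0$ whenever $P(X_{i_j}\mid B_{i_j})=-\infty$, and all real $c_1,\dots,c_n$ with $c_j=P(X_{i_j}\mid B_{i_j})$ whenever that prevision is finite, we have $\sup_\omega \sum_{j=1}^n \alpha_j B_{i_j}(\omega)[X_{i_j}(\omega)-c_j]\ge 0$. *)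

theory Defs
  imports "HOL-Library.Extended_Real" "HOL-Library.Indicator_Function"
begin

text \<open>States are elements of the type 'w (Omega = UNIV). A random variable is a
function 'w => real, an event a set of states (identified with its indicator).\<close>

definition coherent1 :: "(('w \<Rightarrow> real) \<times> 'w set) set \<Rightarrow> (('w \<Rightarrow> real) \<times> 'w set \<Rightarrow> ereal) \<Rightarrow> bool" where
  "coherent1 D P \<longleftrightarrow>
     (\<forall>F \<alpha> c. F \<subseteq> D \<and> finite F
        \<and> (\<forall>f\<in>F. P f = \<infinity> \<longrightarrow> \<alpha> f \<ge> (0::real))
        \<and> (\<forall>f\<in>F. P f = -\<infinity> \<longrightarrow> \<alpha> f \<le> 0)
        \<and> (\<forall>f\<in>F. \<bar>P f\<bar> \<noteq> \<infinity> \<longrightarrow> c f = real_of_ereal (P f))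
      \<longrightarrow> (SUP \<omega>. ereal (\<Sum>f\<in>F. \<alpha> f * indicator (snd f) \<omega> * (fst f \<omega> - c f))) \<ge> 0)"

end

theory Submission
  imports Defs
begin

lemma ext_coh:
  fixes D :: "(('w \<Rightarrow> real) \<times> 'w set) set"
    and P :: "('w \<Rightarrow> real) \<times> 'w set \<Rightarrow> ereal"
    and X :: "'w \<Rightarrow> real" and B :: "'w set" and p :: ereal
  assumes coh: "coherent1 D P"
    and bD: "(indicator B, UNIV) \<in> D"
    and xD: "((\<lambda>\<omega>. X \<omega> * indicator B \<omega>), UNIV) \<in> D"
    and new: "(X, B) \<notin> D"
    and PB: "P (indicator B, UNIV) = 0"
    and cond: "P ((\<lambda>\<omega>. X \<omega> * indicator B \<omega>), UNIV) = 0
       \<or> (p = \<infinity> \<and> P ((\<lambda>\<omega>. X \<omega> * indicator B \<omega>), UNIV) > 0)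
       \<or> (p = -\<infinity> \<and> P ((\<lambda>\<omega>. X \<omega> * indicator B \<omega>), UNIV) < 0)"
  shows "coherent1 (insert (X, B) D) (P((X, B) := p))"
  unfolding coherent1_def
proof (intro allI impI)
  fix F :: "(('w \<Rightarrow> real) \<times> 'w set) set" and \<alpha> c
  define e where "e = (X, B)"
  define b :: "('w \<Rightarrow> real) \<times> 'w set" where "b = (indicator B, UNIV)"
  define x :: "('w \<Rightarrow> real) \<times> 'w set" where "x = ((\<lambda>\<omega>. X \<omega> * indicator B \<omega>), UNIV)"
  define P' where "P' = P((X, B) := p)"
  assume H: "F \<subseteq> insert (X, B) D \<and> finite F
        \<and> (\<forall>f\<in>F. P' f = \<infinity> \<longrightarrow> \<alpha> f \<ge> (0::real))
        \<and> (\<forall>f\<in>F. P' f = -\<infinity> \<longrightarrow> \<alpha> f \<le> 0)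
        \<and> (\<forall>f\<in>F. \<bar>P' f\<bar> \<noteq> \<infinity> \<longrightarrow> c f = real_of_ereal (P' f))"
  define a where "a = P x"
  define F' where "F' = F - {e}"
  define \<alpha>1 where "\<alpha>1 = (if e \<in> F then \<alpha> e else 0)"
  define c1 where "c1 = c e"
  define cx where "cx = (if \<bar>a\<bar> \<noteq> \<infinity> then real_of_ereal a else if a = \<infinity> then max (c x) 0 else min (c x) 0)"
  define \<alpha>0 where "\<alpha>0 f = (if f \<in> F' then \<alpha> f else 0)" for f
  define \<alpha>2 where "\<alpha>2 f = \<alpha>0 f + (if f = x then \<alpha>1 else 0) + (if f = b then - \<alpha>1 * c1 else 0)" for f
  define c2 where "c2 f = (if f = x then cx else if f = b then 0 else c f)" for f
  define F2 where "F2 = insert x (insert b F')"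
  have xe: "x \<noteq> e" using xD new unfolding x_def e_def by auto
  have be: "b \<noteq> e" using bD new unfolding b_def e_def by auto
  have Pb: "P b = 0" using PB b_def by simp
  have F'D: "F' \<subseteq> D" using H unfolding F'_def e_def by auto
  have finF: "finite F" using H by blast
  have finF': "finite F'" using finF F'_def by simp
  have P'F': "P' f = P f" if "f \<in> F'" for f using that unfolding F'_def P'_def e_def by auto
  have cond': "a = 0 \<or> (p = \<infinity> \<and> a > 0) \<or> (p = -\<infinity> \<and> a < 0)"
    using cond unfolding a_def x_def by simp
  have bx0: "a = 0" if "b = x" using Pb that a_def by simp
  have \<alpha>1pos: "\<alpha>1 \<ge> 0" if "p = \<infinity>"
    using H that unfolding \<alpha>1_def P'_def e_def by auto
  have \<alpha>1neg: "\<alpha>1 \<le> 0" if "p = -\<infinity>"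
    using H that unfolding \<alpha>1_def P'_def e_def by auto
  have cxfin: "cx = real_of_ereal a" if "\<bar>a\<bar> \<noteq> \<infinity>" using that cx_def by simp
  have cxF': "c x = cx" if "x \<in> F'" "\<bar>a\<bar> \<noteq> \<infinity>"
    using H that P'F'[OF that(1)] unfolding F'_def cx_def a_def by auto
  have adm: "F2 \<subseteq> D \<and> finite F2
        \<and> (\<forall>f\<in>F2. P f = \<infinity> \<longrightarrow> \<alpha>2 f \<ge> (0::real))
        \<and> (\<forall>f\<in>F2. P f = -\<infinity> \<longrightarrow> \<alpha>2 f \<le> 0)
        \<and> (\<forall>f\<in>F2. \<bar>P f\<bar> \<noteq> \<infinity> \<longrightarrow> c2 f = real_of_ereal (P f))"
  proof (intro conjI ballI impI)
    show "F2 \<subseteq> D" using F'D bD xD unfolding F2_def b_def x_def by auto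
    show "finite F2" using finF' F2_def by simp
  next
    fix f assume f: "f \<in> F2" "P f = \<infinity>"
    show "\<alpha>2 f \<ge> 0"
    proof (cases "f = x")
      case True
      then have ainf: "a = \<infinity>" using f a_def by simp
      then have "b \<noteq> x" using Pb a_def by auto
      moreover have "p = \<infinity>" using cond' ainf by auto
      moreover have "\<alpha>0 x \<ge> 0" using H P'F'[of x] ainf a_def unfolding \<alpha>0_def F'_def by auto
      ultimately show ?thesis using True \<alpha>1pos unfolding \<alpha>2_def by auto
    next
      case False
      then have "f \<noteq> b" using f Pb by auto
      then show ?thesis using False f H P'F'[of f] F2_def unfolding \<alpha>2_def \<alpha>0_def F'_def by auto
    qed
  next
    fix f assume f: "f \<in> F2" "P f = -\<infinity>"
    show "\<alpha>2 f \<le> 0"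
    proof (cases "f = x")
      case True
      then have ainf: "a = -\<infinity>" using f a_def by simp
      then have "b \<noteq> x" using Pb a_def by auto
      moreover have "p = -\<infinity>" using cond' ainf by auto
      moreover have "\<alpha>0 x \<le> 0" using H P'F'[of x] ainf a_def unfolding \<alpha>0_def F'_def by auto
      ultimately show ?thesis using True \<alpha>1neg unfolding \<alpha>2_def by auto
    next
      case False
      then have "f \<noteq> b" using f Pb by auto
      then show ?thesis using False f H P'F'[of f] F2_def unfolding \<alpha>2_def \<alpha>0_def F'_def by auto
    qed
  next
    fix f assume f: "f \<in> F2" "\<bar>P f\<bar> \<noteq> \<infinity>"
    show "c2 f = real_of_ereal (P f)"
    proof (cases "f = x")
      case True
      then show ?thesis using f cxfin a_def c2_def by simp
    next
      case False
      show ?thesis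
      proof (cases "f = b")
        case True
        then show ?thesis using False Pb c2_def by simp
      next
        case False2: False
        then show ?thesis using False f H P'F'[of f] F2_def unfolding c2_def F'_def by auto
      qed
    qed
  qed
  then have S: "(SUP \<omega>. ereal (\<Sum>f\<in>F2. \<alpha>2 f * indicator (snd f) \<omega> * (fst f \<omega> - c2 f))) \<ge> 0"
    using coh unfolding coherent1_def by blast
  have pw: "(\<Sum>f\<in>F2. \<alpha>2 f * indicator (snd f) \<omega> * (fst f \<omega> - c2 f))
         \<le> (\<Sum>f\<in>F. \<alpha> f * indicator (snd f) \<omega> * (fst f \<omega> - c f))" for \<omega>
  proof -
    define g where "g f = \<alpha> f * indicator (snd f) \<omega> * (fst f \<omega> - c f)" for f
    have o1: "(\<Sum>f\<in>F. g f) = (\<Sum>f\<in>F'. g f) + \<alpha>1 * indicator B \<omega> * (X \<omega> - c1)"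
      using finF unfolding F'_def \<alpha>1_def c1_def g_def e_def by (simp add: sum_diff1)
    have c2b: "c2 b = 0" using bx0 cxfin unfolding c2_def by auto
    have n1: "(\<Sum>f\<in>F2. \<alpha>2 f * indicator (snd f) \<omega> * (fst f \<omega> - c2 f))
       = (\<Sum>f\<in>F2. \<alpha>0 f * indicator (snd f) \<omega> * (fst f \<omega> - c2 f))
        + (\<Sum>f\<in>F2. if f = x then \<alpha>1 * indicator (snd f) \<omega> * (fst f \<omega> - c2 f) else 0)
        + (\<Sum>f\<in>F2. if f = b then (- \<alpha>1 * c1) * indicator (snd f) \<omega> * (fst f \<omega> - c2 f) else 0)"
      unfolding \<alpha>2_def by (simp add: sum.distrib distrib_right if_distrib[where f="\<lambda>z. z * _"] cong: if_cong)
    have n2: "(\<Sum>f\<in>F2. if f = x then \<alpha>1 * indicator (snd f) \<omega> * (fst f \<omega> - c2 f) else 0)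
       = \<alpha>1 * (X \<omega> * indicator B \<omega> - cx)"
      using finF' unfolding F2_def by (simp add: x_def c2_def)
    have n3: "(\<Sum>f\<in>F2. if f = b then (- \<alpha>1 * c1) * indicator (snd f) \<omega> * (fst f \<omega> - c2 f) else 0)
       = (- \<alpha>1 * c1) * indicator B \<omega>"
      using finF' c2b unfolding F2_def by (simp add: b_def)
    have n4: "(\<Sum>f\<in>F2. \<alpha>0 f * indicator (snd f) \<omega> * (fst f \<omega> - c2 f))
       = (\<Sum>f\<in>F'. \<alpha> f * indicator (snd f) \<omega> * (fst f \<omega> - c2 f))"
    proof -
      have "(\<Sum>f\<in>F2. \<alpha>0 f * indicator (snd f) \<omega> * (fst f \<omega> - c2 f))
         = (\<Sum>f\<in>F'. \<alpha>0 f * indicator (snd f) \<omega> * (fst f \<omega> - c2 f))"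
        by (rule sum.mono_neutral_right) (use finF' in \<open>auto simp: F2_def \<alpha>0_def\<close>)
      then show ?thesis unfolding \<alpha>0_def by simp
    qed
    have n5: "(\<Sum>f\<in>F'. \<alpha> f * indicator (snd f) \<omega> * (fst f \<omega> - c2 f))
       = (\<Sum>f\<in>F'. g f + (if f = x then \<alpha> x * (c x - cx) else 0))"
    proof (rule sum.cong)
      fix f assume f: "f \<in> F'"
      show "\<alpha> f * indicator (snd f) \<omega> * (fst f \<omega> - c2 f) = g f + (if f = x then \<alpha> x * (c x - cx) else 0)"
      proof (cases "f = x")
        case True then show ?thesis unfolding g_def c2_def by (simp add: x_def algebra_simps)
      next
        case False
        show ?thesis
        proof (cases "f = b")
          case True
          have "c f = 0" using H f True Pb P'F'[OF f] unfolding F'_def by auto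
          then show ?thesis using True False c2b unfolding g_def by simp
        next
          case False2: False
          then show ?thesis using False unfolding g_def c2_def by simp
        qed
      qed
    qed simp
    have n6: "(\<Sum>f\<in>F'. g f + (if f = x then \<alpha> x * (c x - cx) else 0))
       = (\<Sum>f\<in>F'. g f) + (if x \<in> F' then \<alpha> x * (c x - cx) else 0)"
      using finF' by (simp add: sum.distrib)
    have k1: "\<alpha>1 * cx \<ge> 0"
    proof -
      consider "\<bar>a\<bar> \<noteq> \<infinity>" | "a = \<infinity>" | "a = -\<infinity>" by (cases a) auto
      then show ?thesis
      proof cases
        case 1
        then have "cx = real_of_ereal a" using cxfin by simp
        moreover from cond' 1 have "a = 0 \<or> (\<alpha>1 \<ge> 0 \<and> real_of_ereal a > 0) \<or> (\<alpha>1 \<le> 0 \<and> real_of_ereal a < 0)"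
          using \<alpha>1pos \<alpha>1neg by (cases a) auto
        ultimately have "cx = 0 \<or> (\<alpha>1 \<ge> 0 \<and> cx \<ge> 0) \<or> (\<alpha>1 \<le> 0 \<and> cx \<le> 0)" by (metis order_less_imp_le real_of_ereal_0)
        then show ?thesis by (auto intro: mult_nonneg_nonneg mult_nonpos_nonpos)
      next
        case 2
        then have "p = \<infinity>" using cond' by auto
        then show ?thesis using \<alpha>1pos 2 cx_def by auto
      next
        case 3
        then have "p = -\<infinity>" using cond' by auto
        then show ?thesis using \<alpha>1neg 3 cx_def by (auto intro: mult_nonpos_nonpos)
      qed
    qed
    have k2: "\<alpha> x * (cx - c x) \<ge> 0" if xF: "x \<in> F'"
    proof -
      consider "\<bar>a\<bar> \<noteq> \<infinity>" | "a = \<infinity>" | "a = -\<infinity>" by (cases a) auto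
      then show ?thesis
      proof cases
        case 1 then show ?thesis using cxF'[OF xF] by simp
      next
        case 2
        then have "\<alpha> x \<ge> 0" using H xF P'F'[OF xF] a_def unfolding F'_def by auto
        moreover have "cx - c x \<ge> 0" using 2 cx_def by auto
        ultimately show ?thesis by simp
      next
        case 3
        then have "\<alpha> x \<le> 0" using H xF P'F'[OF xF] a_def unfolding F'_def by auto
        moreover have "cx - c x \<le> 0" using 3 cx_def by auto
        ultimately show ?thesis by (simp add: mult_nonpos_nonpos)
      qed
    qed
    have k3: "(if x \<in> F' then \<alpha> x * (c x - cx) else 0) \<le> 0"
      using k2 by (auto simp: algebra_simps)
    have id: "\<alpha>1 * (X \<omega> * indicator B \<omega> - cx) + (- \<alpha>1 * c1) * indicator B \<omega>
        = \<alpha>1 * indicator B \<omega> * (X \<omega> - c1) - \<alpha>1 * cx" by (simp add: algebra_simps)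
    show ?thesis
      unfolding o1[unfolded g_def] using n1 n2 n3 n4 n5 n6 k1 k3 id unfolding g_def by linarith
  qed
  have "(SUP \<omega>. ereal (\<Sum>f\<in>F2. \<alpha>2 f * indicator (snd f) \<omega> * (fst f \<omega> - c2 f)))
      \<le> (SUP \<omega>. ereal (\<Sum>f\<in>F. \<alpha> f * indicator (snd f) \<omega> * (fst f \<omega> - c f)))"
    by (rule SUP_mono) (use pw in auto)
  with S show "(SUP \<omega>. ereal (\<Sum>f\<in>F. \<alpha> f * indicator (snd f) \<omega> * (fst f \<omega> - c f))) \<ge> 0"
    by simp
qed


lemma only_pos:
  fixes D :: "(('w \<Rightarrow> real) \<times> 'w set) set"
    and P :: "('w \<Rightarrow> real) \<times> 'w set \<Rightarrow> ereal"
    and X :: "'w \<Rightarrow> real" and B :: "'w set" and p :: ereal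
  assumes bD: "(indicator B, UNIV) \<in> D"
    and xD: "((\<lambda>\<omega>. X \<omega> * indicator B \<omega>), UNIV) \<in> D"
    and new: "(X, B) \<notin> D"
    and PB: "P (indicator B, UNIV) = 0"
    and apos: "P ((\<lambda>\<omega>. X \<omega> * indicator B \<omega>), UNIV) > 0"
    and pn: "p \<noteq> \<infinity>"
  shows "\<not> coherent1 (insert (X, B) D) (P((X, B) := p))"
proof
  assume C: "coherent1 (insert (X, B) D) (P((X, B) := p))"
  define e where "e = (X, B)"
  define b :: "('w \<Rightarrow> real) \<times> 'w set" where "b = (indicator B, UNIV)"
  define x :: "('w \<Rightarrow> real) \<times> 'w set" where "x = ((\<lambda>\<omega>. X \<omega> * indicator B \<omega>), UNIV)"
  define P' where "P' = P((X, B) := p)"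
  define a where "a = P x"
  define c1 where "c1 = real_of_ereal p"
  define c3 where "c3 = (if a = \<infinity> then 1 else real_of_ereal a)"
  define \<alpha> where "\<alpha> f = (if f = e then -1 else if f = b then - c1 else if f = x then 1 else (0::real))" for f
  define c where "c f = (if f = e then c1 else if f = b then 0 else if f = x then c3 else 0)" for f
  define F where "F = {e, b, x}"
  have xe: "x \<noteq> e" using xD new unfolding x_def e_def by auto
  have be: "b \<noteq> e" using bD new unfolding b_def e_def by auto
  have Pb: "P b = 0" using PB b_def by simp
  have apos': "a > 0" using apos a_def x_def by simp
  have bx: "b \<noteq> x" using Pb apos' a_def by auto
  have c3pos: "c3 > 0" using apos' unfolding c3_def by (cases a) auto
  have P'e: "P' e = p" and P'b: "P' b = 0" and P'x: "P' x = a"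
    using xe be Pb unfolding P'_def e_def a_def by auto
  have "F \<subseteq> insert (X, B) D \<and> finite F
        \<and> (\<forall>f\<in>F. P' f = \<infinity> \<longrightarrow> \<alpha> f \<ge> (0::real))
        \<and> (\<forall>f\<in>F. P' f = -\<infinity> \<longrightarrow> \<alpha> f \<le> 0)
        \<and> (\<forall>f\<in>F. \<bar>P' f\<bar> \<noteq> \<infinity> \<longrightarrow> c f = real_of_ereal (P' f))"
    using bD xD pn apos' P'e P'b P'x xe be bx
    unfolding F_def e_def[symmetric] b_def[symmetric] x_def[symmetric] \<alpha>_def c_def c1_def c3_def
    by (auto simp: e_def)
  then have S: "(SUP \<omega>. ereal (\<Sum>f\<in>F. \<alpha> f * indicator (snd f) \<omega> * (fst f \<omega> - c f))) \<ge> 0"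
    using C unfolding coherent1_def P'_def by blast
  have sum3: "(\<Sum>f\<in>F. h f) = h e + h b + h x" for h :: "_ \<Rightarrow> real"
    using xe be bx unfolding F_def by (simp add: algebra_simps)
  have "(\<Sum>f\<in>F. \<alpha> f * indicator (snd f) \<omega> * (fst f \<omega> - c f)) = - c3" for \<omega>
    unfolding sum3 using xe be bx
    by (simp add: \<alpha>_def c_def) (simp add: e_def b_def x_def algebra_simps)
  then have "(SUP \<omega>. ereal (\<Sum>f\<in>F. \<alpha> f * indicator (snd f) \<omega> * (fst f \<omega> - c f))) = ereal (- c3)"
    by simp
  with S c3pos show False by simp
qed

lemma only_neg:
  fixes D :: "(('w \<Rightarrow> real) \<times> 'w set) set"
    and P :: "('w \<Rightarrow> real) \<times> 'w set \<Rightarrow> ereal"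
    and X :: "'w \<Rightarrow> real" and B :: "'w set" and p :: ereal
  assumes bD: "(indicator B, UNIV) \<in> D"
    and xD: "((\<lambda>\<omega>. X \<omega> * indicator B \<omega>), UNIV) \<in> D"
    and new: "(X, B) \<notin> D"
    and PB: "P (indicator B, UNIV) = 0"
    and apos: "P ((\<lambda>\<omega>. X \<omega> * indicator B \<omega>), UNIV) < 0"
    and pn: "p \<noteq> -\<infinity>"
  shows "\<not> coherent1 (insert (X, B) D) (P((X, B) := p))"
proof
  assume C: "coherent1 (insert (X, B) D) (P((X, B) := p))"
  define e where "e = (X, B)"
  define b :: "('w \<Rightarrow> real) \<times> 'w set" where "b = (indicator B, UNIV)"
  define x :: "('w \<Rightarrow> real) \<times> 'w set" where "x = ((\<lambda>\<omega>. X \<omega> * indicator B \<omega>), UNIV)"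
  define P' where "P' = P((X, B) := p)"
  define a where "a = P x"
  define c1 where "c1 = real_of_ereal p"
  define c3 where "c3 = (if a = -\<infinity> then -1 else real_of_ereal a)"
  define \<alpha> where "\<alpha> f = (if f = e then 1 else if f = b then c1 else if f = x then -1 else (0::real))" for f
  define c where "c f = (if f = e then c1 else if f = b then 0 else if f = x then c3 else 0)" for f
  define F where "F = {e, b, x}"
  have xe: "x \<noteq> e" using xD new unfolding x_def e_def by auto
  have be: "b \<noteq> e" using bD new unfolding b_def e_def by auto
  have Pb: "P b = 0" using PB b_def by simp
  have apos': "a < 0" using apos a_def x_def by simp
  have bx: "b \<noteq> x" using Pb apos' a_def by auto
  have c3pos: "c3 < 0" using apos' unfolding c3_def by (cases a) auto
  have P'e: "P' e = p" and P'b: "P' b = 0" and P'x: "P' x = a"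
    using xe be Pb unfolding P'_def e_def a_def by auto
  have "F \<subseteq> insert (X, B) D \<and> finite F
        \<and> (\<forall>f\<in>F. P' f = \<infinity> \<longrightarrow> \<alpha> f \<ge> (0::real))
        \<and> (\<forall>f\<in>F. P' f = -\<infinity> \<longrightarrow> \<alpha> f \<le> 0)
        \<and> (\<forall>f\<in>F. \<bar>P' f\<bar> \<noteq> \<infinity> \<longrightarrow> c f = real_of_ereal (P' f))"
    using bD xD pn apos' P'e P'b P'x xe be bx
    unfolding F_def e_def[symmetric] b_def[symmetric] x_def[symmetric] \<alpha>_def c_def c1_def c3_def
    by (auto simp: e_def)
  then have S: "(SUP \<omega>. ereal (\<Sum>f\<in>F. \<alpha> f * indicator (snd f) \<omega> * (fst f \<omega> - c f))) \<ge> 0"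
    using C unfolding coherent1_def P'_def by blast
  have sum3: "(\<Sum>f\<in>F. h f) = h e + h b + h x" for h :: "_ \<Rightarrow> real"
    using xe be bx unfolding F_def by (simp add: algebra_simps)
  have "(\<Sum>f\<in>F. \<alpha> f * indicator (snd f) \<omega> * (fst f \<omega> - c f)) = c3" for \<omega>
    unfolding sum3 using xe be bx
    by (simp add: \<alpha>_def c_def) (simp add: e_def b_def x_def algebra_simps)
  then have "(SUP \<omega>. ereal (\<Sum>f\<in>F. \<alpha> f * indicator (snd f) \<omega> * (fst f \<omega> - c f))) = ereal c3"
    by simp
  with S c3pos show False by simp
qed

theorem lemma6p2:
  fixes D :: "(('w \<Rightarrow> real) \<times> 'w set) set"
    and P :: "('w \<Rightarrow> real) \<times> 'w set \<Rightarrow> ereal"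
    and X :: "'w \<Rightarrow> real" and B :: "'w set"
  assumes nonempty: "\<forall>f\<in>D. snd f \<noteq> {}"
    and coh: "coherent1 D P"
    and B_ne: "B \<noteq> {}"
    and B_in: "(indicator B, UNIV) \<in> D"
    and XB_in: "((\<lambda>\<omega>. X \<omega> * indicator B \<omega>), UNIV) \<in> D"
    and new: "(X, B) \<notin> D"
    and PB: "P (indicator B, UNIV) = 0"
  shows "(P ((\<lambda>\<omega>. X \<omega> * indicator B \<omega>), UNIV) \<noteq> 0 \<longrightarrow>
           (\<forall>p. coherent1 (insert (X, B) D) (P((X, B) := p)) \<longleftrightarrow>
                p = (if P ((\<lambda>\<omega>. X \<omega> * indicator B \<omega>), UNIV) > 0 then \<infinity> else -\<infinity>)))
       \<and> (P ((\<lambda>\<omega>. X \<omega> * indicator B \<omega>), UNIV) = 0 \<longrightarrow>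
           (\<forall>p. coherent1 (insert (X, B) D) (P((X, B) := p))))"
proof (intro conjI impI allI)
  fix p assume "P ((\<lambda>\<omega>. X \<omega> * indicator B \<omega>), UNIV) = 0"
  then show "coherent1 (insert (X, B) D) (P((X, B) := p))"
    using ext_coh[OF coh B_in XB_in new PB] by blast
next
  fix p :: ereal
  assume nz: "P ((\<lambda>\<omega>. X \<omega> * indicator B \<omega>), UNIV) \<noteq> 0"
  show "coherent1 (insert (X, B) D) (P((X, B) := p)) \<longleftrightarrow>
                p = (if P ((\<lambda>\<omega>. X \<omega> * indicator B \<omega>), UNIV) > 0 then \<infinity> else -\<infinity>)"
  proof (cases "P ((\<lambda>\<omega>. X \<omega> * indicator B \<omega>), UNIV) > 0")
    case True
    then show ?thesis
      using ext_coh[OF coh B_in XB_in new PB, of p] only_pos[OF B_in XB_in new PB True, of p] by auto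
  next
    case False
    then have neg: "P ((\<lambda>\<omega>. X \<omega> * indicator B \<omega>), UNIV) < 0" using nz by auto
    then show ?thesis
      using False ext_coh[OF coh B_in XB_in new PB, of p] only_neg[OF B_in XB_in new PB neg, of p] by auto
  qed
qed

end
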